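(* Let $F=\{T_1,\dots,T_n\}$ be a finite family of reduction operators relative to a well-ordered set $(G,<)$ and let $\tilde F=\{\tilde T_1,\dots,\tilde T_n\}$ be the reduction of $F$. Then $\wedge\tilde F=\wedge F$ and $\mathrm{obs}(F)\subseteq\mathrm{obs}(\tilde F)$.
   Context: Let $\mathbb{K}$ be a field, $(G,<)$ a well-ordered set and $\mathbb{K}G$ the vector space with basis $G$. For $v\neq0$, $\mathrm{lt}(v)$ is the greatest element of $G$ appearing with nonzero coefficient in $v$. Extend $<$ to $\mathbb{K}G$: $u<v$ if $u=0$ and $v\neq0$, or if $\mathrm{lt}(u)<\mathrm{lt}(v)$; $u\le v$ means $u<v$ or $u=v$. A reduction operator is an idempotent linear endomorphism $T$ of $\mathbb{K}G$ with $T(g)\le g$ for all $g\in G$; $\mathrm{nf}(T)=\{g\in G\mid T(g)=g\}$, $\mathrm{red}(T)=G\setminus\mathrm{nf}(T)$. For every subspace $V$ there is a unique reduction operator $\ker^{-1}(V)$ with kernel $V$. For a set $F$ of reduction operators, $\wedge F=\ker^{-1}(\sum_{T\in F}\ker T)$, $\mathrm{nf}(F)=\bigcap_{T\in F}\mathrm{nf}(T)$ (which contains $\mathrm{nf}(\wedge F)$), and $\mathrm{obs}(F)=\mathrm{nf}(F)\setminus\mathrm{nf}(\wedge F)$. For $F=\{T_1,\dots,T_n\}$: $\mathbf{ker}(F)=\ker T_1\times\dots\times\ker T_n$, $\pi_F(v_1,\dots,v_n)=v_1+\dots+v_n$, $\mathrm{syz}(F)=\ker\pi_F$. For $g\in\mathrm{red}(T_i)$,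 $e_{i,g}$ is the tuple with $g-T_i(g)$ at position $i$ and $0$ elsewhere; these form a basis of $\mathbf{ker}(F)$, well-ordered by $e_{i,g}\sqsubset e_{i',g'}$ iff $i<i'$, or $i=i'$ and $g<g'$; $\mathrm{lt}(\mathrm{syz}(F))$ is the set of $\sqsubset$-greatest basis elements appearing in nonzero elements of $\mathrm{syz}(F)$. The reduction of $F$ is $\tilde F=\{\tilde T_1,\dots,\tilde T_n\}$ where $\tilde T_i$ is the linear map with $\tilde T_i(g)=g$ if $g\in\mathrm{red}(T_i)$ and $e_{i,g}\in\mathrm{lt}(\mathrm{syz}(F))$, and $\tilde T_i(g)=T_i(g)$ otherwise, for $g\in G$; each $\tilde T_i$ is a reduction operator. *)

theory Defs
  imports Main "HOL-Library.Poly_Mapping"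
begin

text \<open>The vector space KG with basis G is modelled as the finitely supported
  finitely supported maps G to K; the basis element g is Poly_Mapping.single g 1.
  (G,<) is a type of class wellorder, K a type of class field.\<close>

type_synonym ('g, 'k) vec = "'g \<Rightarrow>\<^sub>0 'k"

definition bvec :: "'g \<Rightarrow> ('g, 'k::field) vec" where
  "bvec g = Poly_Mapping.single g 1"

definition scal :: "'k::field \<Rightarrow> ('g, 'k) vec \<Rightarrow> ('g, 'k) vec" where
  "scal c v = Poly_Mapping.map (\<lambda>x. c * x) v"

definition lt :: "('g::wellorder, 'k::field) vec \<Rightarrow> 'g" where
  "lt v = Max (Poly_Mapping.keys v)"

definition vless :: "('g::wellorder, 'k::field) vec \<Rightarrow> ('g, 'k) vec \<Rightarrow> bool" where
  "vless u v \<longleftrightarrow> (u = 0 \<and> v \<noteq> 0) \<or> (u \<noteq> 0 \<and> v \<noteq> 0 \<and> lt u < lt v)"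

definition vle :: "('g::wellorder, 'k::field) vec \<Rightarrow> ('g, 'k) vec \<Rightarrow> bool" where
  "vle u v \<longleftrightarrow> vless u v \<or> u = v"

definition linear_op :: "(('g, 'k::field) vec \<Rightarrow> ('g, 'k) vec) \<Rightarrow> bool" where
  "linear_op T \<longleftrightarrow> (\<forall>u v. T (u + v) = T u + T v) \<and> (\<forall>c v. T (scal c v) = scal c (T v))"

definition reduction_op :: "(('g::wellorder, 'k::field) vec \<Rightarrow> ('g, 'k) vec) \<Rightarrow> bool" where
  "reduction_op T \<longleftrightarrow> linear_op T \<and> T \<circ> T = T \<and> (\<forall>g. vle (T (bvec g)) (bvec g))"

definition nf :: "(('g::wellorder, 'k::field) vec \<Rightarrow> ('g, 'k) vec) \<Rightarrow> 'g set" where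
  "nf T = {g. T (bvec g) = bvec g}"

definition red :: "(('g::wellorder, 'k::field) vec \<Rightarrow> ('g, 'k) vec) \<Rightarrow> 'g set" where
  "red T = UNIV - nf T"

definition kernel :: "(('g, 'k::field) vec \<Rightarrow> ('g, 'k) vec) \<Rightarrow> ('g, 'k) vec set" where
  "kernel T = {v. T v = 0}"

definition ker_inv :: "('g::wellorder, 'k::field) vec set \<Rightarrow> (('g, 'k) vec \<Rightarrow> ('g, 'k) vec)" where
  "ker_inv V = (THE T. reduction_op T \<and> kernel T = V)"

text \<open>A finite family F = {T_0, ..., T_(n-1)} is given as T :: nat \<Rightarrow> operator and n.\<close>
definition wedge :: "nat \<Rightarrow> (nat \<Rightarrow> ('g::wellorder, 'k::field) vec \<Rightarrow> ('g, 'k) vec)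
    \<Rightarrow> (('g, 'k) vec \<Rightarrow> ('g, 'k) vec)" where
  "wedge n T = ker_inv {v. \<exists>vs. (\<forall>i<n. vs i \<in> kernel (T i)) \<and> v = (\<Sum>i<n. vs i)}"

definition nfF :: "nat \<Rightarrow> (nat \<Rightarrow> ('g::wellorder, 'k::field) vec \<Rightarrow> ('g, 'k) vec) \<Rightarrow> 'g set" where
  "nfF n T = {g. \<forall>i<n. g \<in> nf (T i)}"

definition obs :: "nat \<Rightarrow> (nat \<Rightarrow> ('g::wellorder, 'k::field) vec \<Rightarrow> ('g, 'k) vec) \<Rightarrow> 'g set" where
  "obs n T = nfF n T - nf (wedge n T)"

text \<open>Tuples (v_0,...,v_(n-1)) are functions nat \<Rightarrow> vec, zero outside {..<n}.\<close>
definition kerF :: "nat \<Rightarrow> (nat \<Rightarrow> ('g::wellorder, 'k::field) vec \<Rightarrow> ('g, 'k) vec)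
    \<Rightarrow> (nat \<Rightarrow> ('g, 'k) vec) set" where
  "kerF n T = {s. (\<forall>i<n. s i \<in> kernel (T i)) \<and> (\<forall>i\<ge>n. s i = 0)}"

definition piF :: "nat \<Rightarrow> (nat \<Rightarrow> ('g, 'k::field) vec) \<Rightarrow> ('g, 'k) vec" where
  "piF n s = (\<Sum>i<n. s i)"

definition syz :: "nat \<Rightarrow> (nat \<Rightarrow> ('g::wellorder, 'k::field) vec \<Rightarrow> ('g, 'k) vec)
    \<Rightarrow> (nat \<Rightarrow> ('g, 'k) vec) set" where
  "syz n T = {s \<in> kerF n T. piF n s = 0}"

definition e_basis :: "(nat \<Rightarrow> ('g::wellorder, 'k::field) vec \<Rightarrow> ('g, 'k) vec)
    \<Rightarrow> nat \<Rightarrow> 'g \<Rightarrow> (nat \<Rightarrow> ('g, 'k) vec)" where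
  "e_basis T i g = (\<lambda>j. if j = i then bvec g - T i (bvec g) else 0)"

definition comb :: "(nat \<Rightarrow> ('g::wellorder, 'k::field) vec \<Rightarrow> ('g, 'k) vec)
    \<Rightarrow> (nat \<times> 'g \<Rightarrow>\<^sub>0 'k) \<Rightarrow> (nat \<Rightarrow> ('g, 'k) vec)" where
  "comb T c = (\<lambda>j. \<Sum>p\<in>Poly_Mapping.keys c. scal (Poly_Mapping.lookup c p) (e_basis T (fst p) (snd p) j))"

definition sqlt :: "nat \<times> 'g::wellorder \<Rightarrow> nat \<times> 'g \<Rightarrow> bool" where
  "sqlt p q \<longleftrightarrow> fst p < fst q \<or> (fst p = fst q \<and> snd p < snd q)"

text \<open>lt(syz F): the \<sqsubset>-greatest basis elements appearing (with nonzero
  coefficient in the basis expansion) in nonzero elements of syz F.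
  Elements are indexed by their pair (i,g).\<close>
definition lt_syz :: "nat \<Rightarrow> (nat \<Rightarrow> ('g::wellorder, 'k::field) vec \<Rightarrow> ('g, 'k) vec)
    \<Rightarrow> (nat \<times> 'g) set" where
  "lt_syz n T = {(i, g). \<exists>c.
      (\<forall>p\<in>Poly_Mapping.keys c. fst p < n \<and> snd p \<in> red (T (fst p))) \<and>
      comb T c \<in> syz n T \<and> comb T c \<noteq> (\<lambda>_. 0) \<and>
      (i, g) \<in> Poly_Mapping.keys c \<and> (\<forall>q\<in>Poly_Mapping.keys c. q = (i, g) \<or> sqlt q (i, g))}"

definition lin_ext :: "('g \<Rightarrow> ('g, 'k::field) vec) \<Rightarrow> ('g, 'k) vec \<Rightarrow> ('g, 'k) vec" where
  "lin_ext f v = (\<Sum>g\<in>Poly_Mapping.keys v. scal (Poly_Mapping.lookup v g) (f g))"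

definition reduce :: "nat \<Rightarrow> (nat \<Rightarrow> ('g::wellorder, 'k::field) vec \<Rightarrow> ('g, 'k) vec)
    \<Rightarrow> (nat \<Rightarrow> ('g, 'k) vec \<Rightarrow> ('g, 'k) vec)" where
  "reduce n T = (\<lambda>i. lin_ext (\<lambda>g. if g \<in> red (T i) \<and> (i, g) \<in> lt_syz n T
                                   then bvec g else T i (bvec g)))"

end

theory Submission
  imports Defs
begin

lemma lookup_scal[simp]: "Poly_Mapping.lookup (scal c v) k = c * Poly_Mapping.lookup v k"
  unfolding scal_def by (simp add: Poly_Mapping.map.rep_eq when_def)

lemma scal_add: "scal c (u + v) = scal c u + scal c v"
  by (rule poly_mapping_eqI) (simp add: lookup_add algebra_simps)
lemma scal_add2: "scal (a + b) v = scal a v + scal b v"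
  by (rule poly_mapping_eqI) (simp add: lookup_add algebra_simps)
lemma scal_0[simp]: "scal c 0 = 0"
  by (rule poly_mapping_eqI) simp
lemma scal_0'[simp]: "scal 0 v = 0"
  by (rule poly_mapping_eqI) simp
lemma scal_1[simp]: "scal 1 v = v"
  by (rule poly_mapping_eqI) simp
lemma scal_scal: "scal a (scal b v) = scal (a*b) v"
  by (rule poly_mapping_eqI) simp
lemma scal_neg: "scal (-1) v = - v"
  by (rule poly_mapping_eqI) simp
lemma scal_minus: "scal c (u - v) = scal c u - scal c v"
  by (rule poly_mapping_eqI) (simp add: lookup_minus algebra_simps)
lemma scal_sum: "scal c (sum f A) = (\<Sum>x\<in>A. scal c (f x))"
  by (induction A rule: infinite_finite_induct) (auto simp: scal_add)
lemma keys_scal: "Poly_Mapping.keys (scal c v) \<subseteq> Poly_Mapping.keys v"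
  by (auto simp: in_keys_iff)

lemma lookup_bvec: "Poly_Mapping.lookup (bvec g) k = (if g = k then 1 else 0)"
  by (simp add: bvec_def lookup_single when_def)
lemma keys_bvec[simp]: "Poly_Mapping.keys (bvec g :: ('g,'k::field) vec) = {g}"
  by (simp add: bvec_def)

lemma lin_ext_superset:
  assumes "finite S" "Poly_Mapping.keys v \<subseteq> S"
  shows "lin_ext f v = (\<Sum>g\<in>S. scal (Poly_Mapping.lookup v g) (f g))"
  unfolding lin_ext_def
  by (rule sum.mono_neutral_left) (use assms in \<open>auto simp: in_keys_iff\<close>)

lemma lin_ext_bvec[simp]: "lin_ext f (bvec g) = f g"
  by (simp add: lin_ext_def lookup_bvec)

lemma lin_ext_add: "lin_ext f (u + v) = lin_ext f u + lin_ext f v"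
proof -
  let ?S = "Poly_Mapping.keys u \<union> Poly_Mapping.keys v"
  have f: "finite ?S" by simp
  have "lin_ext f (u + v) = (\<Sum>g\<in>?S. scal (Poly_Mapping.lookup (u+v) g) (f g))"
    using keys_add[of u v] by (intro lin_ext_superset) auto
  also have "\<dots> = (\<Sum>g\<in>?S. scal (Poly_Mapping.lookup u g) (f g)) + (\<Sum>g\<in>?S. scal (Poly_Mapping.lookup v g) (f g))"
    by (simp add: lookup_add scal_add2 sum.distrib)
  also have "\<dots> = lin_ext f u + lin_ext f v"
    using lin_ext_superset[OF f, of u f] lin_ext_superset[OF f, of v f] by simp
  finally show ?thesis .
qed

lemma lin_ext_scal: "lin_ext f (scal c v) = scal c (lin_ext f v)"
proof -
  have "lin_ext f (scal c v) = (\<Sum>g\<in>Poly_Mapping.keys v. scal (Poly_Mapping.lookup (scal c v) g) (f g))"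
    using keys_scal[of c v] by (intro lin_ext_superset) auto
  then show ?thesis by (simp add: lin_ext_def scal_sum scal_scal)
qed

lemma linear_lin_ext: "linear_op (lin_ext f)"
  by (simp add: linear_op_def lin_ext_add lin_ext_scal)

lemma linear_0: "linear_op L \<Longrightarrow> L 0 = 0"
  unfolding linear_op_def by (metis add_cancel_right_right add_0)
lemma linear_sum: "linear_op L \<Longrightarrow> L (sum f A) = (\<Sum>x\<in>A. L (f x))"
  by (induction A rule: infinite_finite_induct) (auto simp: linear_0 linear_op_def)
lemma linear_scal: "linear_op L \<Longrightarrow> L (scal c v) = scal c (L v)"
  by (simp add: linear_op_def)
lemma linear_add: "linear_op L \<Longrightarrow> L (u + v) = L u + L v"
  by (simp add: linear_op_def)
lemma linear_neg: "linear_op L \<Longrightarrow> L (- v) = - L v"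
  by (metis linear_scal scal_neg)
lemma linear_minus: "linear_op L \<Longrightarrow> L (u - v) = L u - L v"
  by (metis diff_conv_add_uminus linear_add linear_neg)

lemma linear_lin_ext_comm: "linear_op L \<Longrightarrow> L (lin_ext f v) = lin_ext (\<lambda>g. L (f g)) v"
  by (simp add: lin_ext_def linear_sum linear_scal)

lemma expand: "lin_ext bvec v = v"
proof (rule poly_mapping_eqI)
  fix k
  have "Poly_Mapping.lookup (lin_ext bvec v) k = (\<Sum>g\<in>Poly_Mapping.keys v. Poly_Mapping.lookup v g * (if g = k then 1 else 0))"
    by (simp add: lin_ext_def lookup_sum lookup_bvec)
  also have "\<dots> = Poly_Mapping.lookup v k"
    by (simp add: in_keys_iff if_distrib cong: if_cong)
  finally show "Poly_Mapping.lookup (lin_ext bvec v) k = Poly_Mapping.lookup v k" .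
qed

lemma linear_expand: "linear_op L \<Longrightarrow> L v = lin_ext (\<lambda>g. L (bvec g)) v"
  by (metis expand linear_lin_ext_comm)

lemma lin_ext_diff: "lin_ext (\<lambda>g. f g - h g) v = lin_ext f v - lin_ext h v"
  by (simp add: lin_ext_def scal_minus sum_subtractf)

lemma lookup_lin_ext: "Poly_Mapping.lookup (lin_ext f v) k = (\<Sum>g\<in>Poly_Mapping.keys v. Poly_Mapping.lookup v g * Poly_Mapping.lookup (f g) k)"
  by (simp add: lin_ext_def lookup_sum)

lemma fix_keys_nf:
  assumes R: "reduction_op L" and fx: "L v = v"
  shows "Poly_Mapping.keys v \<subseteq> nf L"
proof (rule ccontr)
  assume nt: "\<not> ?thesis"
  let ?R = "Poly_Mapping.keys v \<inter> red L"
  have ne: "?R \<noteq> {}" using nt by (auto simp: red_def)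
  have fin: "finite ?R" by simp
  define h where "h = Max ?R"
  have hR: "h \<in> ?R" using Max_in[OF fin ne] h_def by simp
  have hmax: "\<And>g. g \<in> ?R \<Longrightarrow> g \<le> h" using Max_ge[OF fin] h_def by simp
  have lin: "linear_op L" using R by (simp add: reduction_op_def)
  have "Poly_Mapping.lookup (L v) h = (\<Sum>g\<in>Poly_Mapping.keys v. Poly_Mapping.lookup v g * Poly_Mapping.lookup (L (bvec g)) h)"
    using linear_expand[OF lin, of v] lookup_lin_ext by metis
  also have "\<dots> = 0"
  proof (rule sum.neutral, intro ballI)
    fix g assume g: "g \<in> Poly_Mapping.keys v"
    have "Poly_Mapping.lookup (L (bvec g)) h = 0"
    proof (cases "g \<in> nf L")
      case True
      then have "L (bvec g) = bvec g" by (simp add: nf_def)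
      moreover have "g \<noteq> h" using True hR by (auto simp: red_def)
      ultimately show ?thesis by (simp add: lookup_bvec)
    next
      case False
      then have gh: "g \<le> h" using hmax g by (simp add: red_def)
      have ne: "L (bvec g) \<noteq> bvec g" using False by (simp add: nf_def)
      have "vle (L (bvec g)) (bvec g)" using R by (simp add: reduction_op_def)
      then have "vless (L (bvec g)) (bvec g)" using ne by (simp add: vle_def)
      then have "L (bvec g) = 0 \<or> lt (L (bvec g)) < g"
        by (auto simp: vless_def lt_def)
      then show ?thesis
      proof
        assume "L (bvec g) = 0" then show ?thesis by simp
      next
        assume lt: "lt (L (bvec g)) < g"
        show ?thesis
        proof (rule ccontr)
          assume "Poly_Mapping.lookup (L (bvec g)) h \<noteq> 0"
          then have "h \<in> Poly_Mapping.keys (L (bvec g))" by (simp add: in_keys_iff)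
          then have "h \<le> lt (L (bvec g))" unfolding lt_def by simp
          then show False using lt gh by simp
        qed
      qed
    qed
    then show "Poly_Mapping.lookup v g * Poly_Mapping.lookup (L (bvec g)) h = 0" by simp
  qed
  finally have "Poly_Mapping.lookup v h = 0" using fx by simp
  then show False using hR by (simp add: in_keys_iff)
qed

definition KS :: "nat \<Rightarrow> (nat \<Rightarrow> ('g::wellorder, 'k::field) vec \<Rightarrow> ('g, 'k) vec) \<Rightarrow> ('g,'k) vec set" where
  "KS n U = {v. \<exists>vs. (\<forall>i<n. vs i \<in> kernel (U i)) \<and> v = (\<Sum>i<n. vs i)}"

context
  fixes n :: nat and U :: "nat \<Rightarrow> ('g::wellorder, 'k::field) vec \<Rightarrow> ('g, 'k) vec"
  assumes linU: "\<forall>i<n. linear_op (U i)"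
begin

lemma KS_0: "0 \<in> KS n U"
  unfolding KS_def kernel_def
  by (rule CollectI, rule exI[of _ "\<lambda>_. 0"]) (simp add: linU linear_0)

lemma KS_add: "u \<in> KS n U \<Longrightarrow> v \<in> KS n U \<Longrightarrow> u + v \<in> KS n U"
  unfolding KS_def kernel_def
  apply clarify
  subgoal for us vs
    by (rule exI[of _ "\<lambda>i. us i + vs i"]) (simp add: linU linear_add sum.distrib)
  done

lemma KS_scal: "v \<in> KS n U \<Longrightarrow> scal c v \<in> KS n U"
  unfolding KS_def kernel_def
  apply clarify
  subgoal for vs
    by (rule exI[of _ "\<lambda>i. scal c (vs i)"]) (simp add: linU linear_scal scal_sum)
  done

lemma KS_neg: "v \<in> KS n U \<Longrightarrow> - v \<in> KS n U"
  using KS_scal[of v "-1"] by (simp add: scal_neg)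

lemma KS_sum: "(\<And>x. x \<in> A \<Longrightarrow> f x \<in> KS n U) \<Longrightarrow> sum f A \<in> KS n U"
  by (induction A rule: infinite_finite_induct) (auto simp: KS_0 KS_add)

lemma KS_kernel: "i < n \<Longrightarrow> v \<in> kernel (U i) \<Longrightarrow> v \<in> KS n U"
  unfolding KS_def
  apply (rule CollectI, rule exI[of _ "\<lambda>j. if j = i then v else 0"])
  apply (auto simp: kernel_def linU linear_0)
  done

lemma KS_lin_ext: "(\<And>g. f g \<in> KS n U) \<Longrightarrow> lin_ext f v \<in> KS n U"
  unfolding lin_ext_def by (intro KS_sum KS_scal) auto

end

context
  fixes n :: nat and T :: "nat \<Rightarrow> ('g::wellorder, 'k::field) vec \<Rightarrow> ('g, 'k) vec"
  assumes RT: "\<forall>i<n. reduction_op (T i)"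
begin

definition ff where "ff i g = (if g \<in> red (T i) \<and> (i, g) \<in> lt_syz n T then bvec g else T i (bvec g))"

lemma Tt_eq: "reduce n T i = lin_ext (ff i)"
  by (simp add: reduce_def ff_def[abs_def])

lemma linT: "i < n \<Longrightarrow> linear_op (T i)" using RT by (simp add: reduction_op_def)
lemma idemT: "i < n \<Longrightarrow> T i (T i v) = T i v"
  using RT by (auto simp: reduction_op_def fun_eq_iff)

lemma linTt: "linear_op (reduce n T i)" by (simp add: Tt_eq linear_lin_ext)

lemma comp_eq: "i < n \<Longrightarrow> T i (reduce n T i v) = T i v"
proof -
  assume i: "i < n"
  have "T i (reduce n T i v) = lin_ext (\<lambda>g. T i (ff i g)) v"
    by (simp add: Tt_eq linear_lin_ext_comm[OF linT[OF i]])
  also have "\<dots> = lin_ext (\<lambda>g. T i (bvec g)) v"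
    by (rule arg_cong[where f="\<lambda>f. lin_ext f v"]) (auto simp: ff_def fun_eq_iff idemT[OF i])
  also have "\<dots> = T i v" by (rule linear_expand[OF linT[OF i], symmetric])
  finally show ?thesis .
qed

lemma ker_sub: "i < n \<Longrightarrow> v \<in> kernel (reduce n T i) \<Longrightarrow> v \<in> kernel (T i)"
  using comp_eq[of i v] linear_0[OF linT, of i] by (simp add: kernel_def)

lemma nf_sub: "i < n \<Longrightarrow> g \<in> nf (T i) \<Longrightarrow> g \<in> nf (reduce n T i)"
  by (simp add: nf_def Tt_eq ff_def red_def)

lemma Tt_on_image: "i < n \<Longrightarrow> reduce n T i (T i (bvec g)) = T i (bvec g)"
proof -
  assume i: "i < n"
  let ?w = "T i (bvec g)"
  have "Poly_Mapping.keys ?w \<subseteq> nf (T i)"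
    using RT i idemT[OF i] by (intro fix_keys_nf) auto
  then have "lin_ext (ff i) ?w = lin_ext bvec ?w"
    unfolding lin_ext_def by (intro sum.cong) (auto simp: ff_def red_def nf_def)
  then show ?thesis by (simp add: Tt_eq expand)
qed

lemma sum_comb:
  assumes "\<forall>p\<in>Poly_Mapping.keys c. fst p < n"
  shows "(\<Sum>j<n. comb T c j) = (\<Sum>p\<in>Poly_Mapping.keys c. scal (Poly_Mapping.lookup c p) (bvec (snd p) - T (fst p) (bvec (snd p))))"
proof -
  have "(\<Sum>j<n. comb T c j) = (\<Sum>p\<in>Poly_Mapping.keys c. \<Sum>j<n. scal (Poly_Mapping.lookup c p) (e_basis T (fst p) (snd p) j))"
    unfolding comb_def by (rule sum.swap)
  also have "\<dots> = (\<Sum>p\<in>Poly_Mapping.keys c. scal (Poly_Mapping.lookup c p) (bvec (snd p) - T (fst p) (bvec (snd p))))"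
  proof (rule sum.cong[OF refl])
    fix p assume p: "p \<in> Poly_Mapping.keys c"
    have "(\<Sum>j<n. scal (Poly_Mapping.lookup c p) (e_basis T (fst p) (snd p) j))
       = (\<Sum>j<n. if fst p = j then scal (Poly_Mapping.lookup c p) (bvec (snd p) - T (fst p) (bvec (snd p))) else 0)"
      by (rule sum.cong) (auto simp: e_basis_def)
    also have "\<dots> = scal (Poly_Mapping.lookup c p) (bvec (snd p) - T (fst p) (bvec (snd p)))"
      using assms p by simp
    finally show "(\<Sum>j<n. scal (Poly_Mapping.lookup c p) (e_basis T (fst p) (snd p) j)) = scal (Poly_Mapping.lookup c p) (bvec (snd p) - T (fst p) (bvec (snd p)))" .
  qed
  finally show ?thesis .
qed

lemma basis_in: "i < n \<longrightarrow> bvec g - T i (bvec g) \<in> KS n (reduce n T)"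
proof (induction i arbitrary: g rule: less_induct)
  case (less i)
  note IHi = less.IH
  show ?case
  proof (induction g rule: less_induct)
    case (less g)
    note IHg = less.IH
    show ?case
    proof
      assume i: "i < n"
      have linU: "\<forall>i<n. linear_op (reduce n T i)" using linTt by blast
      show "bvec g - T i (bvec g) \<in> KS n (reduce n T)"
      proof (cases "g \<in> red (T i)")
        case False
        then have "bvec g - T i (bvec g) = 0" by (simp add: red_def nf_def)
        then show ?thesis using KS_0[OF linU] by simp
      next
        case red: True
        show ?thesis
        proof (cases "(i, g) \<in> lt_syz n T")
          case False
          have "reduce n T i (bvec g) = T i (bvec g)"
            using False red by (simp add: Tt_eq ff_def)
          then have "reduce n T i (bvec g - T i (bvec g)) = 0"
            by (simp add: linear_minus[OF linTt] Tt_on_image[OF i])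
          then show ?thesis by (intro KS_kernel[OF linU i]) (simp add: kernel_def)
        next
          case True
          then obtain c where
            c1: "\<forall>p\<in>Poly_Mapping.keys c. fst p < n \<and> snd p \<in> red (T (fst p))" and
            c2: "comb T c \<in> syz n T" and
            c3: "(i, g) \<in> Poly_Mapping.keys c" and
            c4: "\<forall>q\<in>Poly_Mapping.keys c. q = (i, g) \<or> sqlt q (i, g)"
            unfolding lt_syz_def by blast
          define X where "X p = bvec (snd p) - T (fst p) (bvec (snd p))" for p
          define a where "a = Poly_Mapping.lookup c (i, g)"
          have a0: "a \<noteq> 0" using c3 by (simp add: a_def in_keys_iff)
          have "(\<Sum>p\<in>Poly_Mapping.keys c. scal (Poly_Mapping.lookup c p) (X p)) = 0"
            using sum_comb[of c] c1 c2 by (simp add: X_def syz_def piF_def)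
          moreover have "(\<Sum>p\<in>Poly_Mapping.keys c. scal (Poly_Mapping.lookup c p) (X p))
             = scal a (X (i,g)) + (\<Sum>p\<in>Poly_Mapping.keys c - {(i,g)}. scal (Poly_Mapping.lookup c p) (X p))"
            using c3 by (simp add: a_def sum.remove)
          ultimately have eq: "scal a (X (i,g)) = - (\<Sum>p\<in>Poly_Mapping.keys c - {(i,g)}. scal (Poly_Mapping.lookup c p) (X p))"
            by (simp add: eq_neg_iff_add_eq_0)
          have "(\<Sum>p\<in>Poly_Mapping.keys c - {(i,g)}. scal (Poly_Mapping.lookup c p) (X p)) \<in> KS n (reduce n T)"
          proof (rule KS_sum[OF linU], rule KS_scal[OF linU])
            fix p assume p: "p \<in> Poly_Mapping.keys c - {(i,g)}"
            then have sq: "sqlt p (i,g)" and pn: "fst p < n" using c4 c1 by auto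
            obtain j h where pjh: "p = (j,h)" by fastforce
            show "X p \<in> KS n (reduce n T)"
            proof (cases "j < i")
              case True
              then show ?thesis using IHi[of j] pn pjh by (simp add: X_def)
            next
              case False
              then have "j = i" "h < g" using sq pjh by (auto simp: sqlt_def)
              then show ?thesis using IHg[of h] i pjh by (simp add: X_def)
            qed
          qed
          then have "scal a (X (i,g)) \<in> KS n (reduce n T)" using eq KS_neg[OF linU] by simp
          then have "scal (inverse a) (scal a (X (i,g))) \<in> KS n (reduce n T)" using KS_scal[OF linU] by blast
          then show ?thesis using a0 by (simp add: scal_scal X_def)
        qed
      qed
    qed
  qed
qed

lemma KS_eq: "KS n (reduce n T) = KS n T"
proof
  show "KS n (reduce n T) \<subseteq> KS n T"
    unfolding KS_def using ker_sub by blast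
next
  have linU: "\<forall>i<n. linear_op (reduce n T i)" using linTt by blast
  show "KS n T \<subseteq> KS n (reduce n T)"
  proof
    fix v assume "v \<in> KS n T"
    then obtain vs where vs: "\<forall>i<n. vs i \<in> kernel (T i)" and v: "v = (\<Sum>i<n. vs i)"
      unfolding KS_def by blast
    have "vs i \<in> KS n (reduce n T)" if i: "i < n" for i
    proof -
      have "vs i = vs i - T i (vs i)" using vs i by (simp add: kernel_def)
      also have "\<dots> = lin_ext bvec (vs i) - lin_ext (\<lambda>g. T i (bvec g)) (vs i)"
        by (subst linear_expand[OF linT[OF i], of "vs i"]) (simp add: expand)
      also have "\<dots> = lin_ext (\<lambda>g. bvec g - T i (bvec g)) (vs i)"
        by (rule lin_ext_diff[symmetric])
      also have "\<dots> \<in> KS n (reduce n T)"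
        by (rule KS_lin_ext[OF linU]) (use basis_in i in blast)
      finally show ?thesis .
    qed
    then show "v \<in> KS n (reduce n T)" unfolding v by (intro KS_sum[OF linU]) auto
  qed
qed

end

theorem mainTheorem7:
  fixes n :: nat
    and T :: "nat \<Rightarrow> ('g::wellorder, 'k::field) vec \<Rightarrow> ('g, 'k) vec"
  assumes "\<forall>i<n. reduction_op (T i)"
  shows "wedge n (reduce n T) = wedge n T \<and> obs n T \<subseteq> obs n (reduce n T)"
proof -
  have w: "wedge n (reduce n T) = wedge n T"
    using KS_eq[OF assms] unfolding wedge_def KS_def by simp
  have "nfF n T \<subseteq> nfF n (reduce n T)"
    using nf_sub[OF assms] unfolding nfF_def by blast
  then show ?thesis unfolding obs_def w by blast
qed

end
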